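(* For every set $\Gamma\cup\{\varphi\}$ of formulas over $\Sigma^\circ$: if $\Gamma\vDash^{\mathsf{RN}}_{\mathcal{M}_{\bf Cila}}\varphi$ then $\Gamma\vdash_{\bf Cila}\varphi$.
   Context: $\Sigma^\circ$ has unary $\neg,\circ$ and binary $\wedge,\vee,\to$. ${\bf Cila}$ is the Hilbert calculus with Modus Ponens as only rule and axiom schemata: $\alpha\to(\beta\to\alpha)$; $(\alpha\to(\beta\to\gamma))\to((\alpha\to\beta)\to(\alpha\to\gamma))$; $\alpha\to(\beta\to(\alpha\wedge\beta))$; $(\alpha\wedge\beta)\to\alpha$; $(\alpha\wedge\beta)\to\beta$; $\alpha\to(\alpha\vee\beta)$; $\beta\to(\alpha\vee\beta)$; $(\alpha\to\gamma)\to((\beta\to\gamma)\to((\alpha\vee\beta)\to\gamma))$; $\alpha\vee\neg\alpha$; $\alpha\vee(\alpha\to\beta)$; $\circ\alpha\to(\alpha\to(\neg\alpha\to\beta))$; $\neg(\alpha\wedge\neg\alpha)\to\circ\alpha$; $\neg\circ\alpha\to(\alpha\wedge\neg\alpha)$; $\neg\neg\alpha\to\alpha$; $(\circ\alpha\wedge\circ\beta)\to\circ(\alpha\#\beta)$ for $\#\in\{\vee,\wedge,\to\}$. $\mathcal{A}_{\bf Cila}$ is the $\Sigma^\circ$-multialgebra with universe $\{F,t,T\}$, $D=\{t,T\}$, and: $F\tilde\vee F=\{F\}$, $F\tilde\vee T=T\tilde\vee F=T\tilde\vee T=\{T\}$, $x\tilde\vee y=D$ whenever $t\in\{x,y\}$;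 $x\tilde\wedge y=\{F\}$ if $F\in\{x,y\}$, $T\tilde\wedge T=\{T\}$, $t\tilde\wedge t=t\tilde\wedge T=T\tilde\wedge t=D$; $\tilde\neg F=\{T\}$, $\tilde\neg t=D$, $\tilde\neg T=\{F\}$; $F\tilde\to F=F\tilde\to T=T\tilde\to T=\{T\}$, $t\tilde\to F=T\tilde\to F=\{F\}$, $x\tilde\to t=D$ for all $x$, $t\tilde\to T=D$; $\tilde\circ F=\tilde\circ T=\{T\}$, $\tilde\circ t=\{F\}$. A valuation is a map with $\nu(\#\alpha)\in\tilde\#\nu(\alpha)$ and $\nu(\alpha\#\beta)\in\nu(\alpha)\tilde\#\nu(\beta)$. $\mathcal{F}_{\bf Cila}$ is the set of valuations with $\nu(\alpha)=t\Rightarrow\nu(\alpha\wedge\neg\alpha)=T$ for all $\alpha$. $\Gamma\vDash^{\mathsf{RN}}_{\mathcal{M}_{\bf Cila}}\varphi$ iff every $\nu\in\mathcal{F}_{\bf Cila}$ with $\nu[\Gamma]\subseteq D$ has $\nu(\varphi)\in D$. *)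

theory Defs
  imports Main
begin

datatype fm =
    Var nat
  | Neg fm
  | Circ fm
  | And fm fm
  | Or fm fm
  | Imp fm fm

inductive cila_axiom :: "fm \<Rightarrow> bool" where
  Ax1: "cila_axiom (Imp a (Imp b a))"
| Ax2: "cila_axiom (Imp (Imp a (Imp b c)) (Imp (Imp a b) (Imp a c)))"
| Ax3: "cila_axiom (Imp a (Imp b (And a b)))"
| Ax4: "cila_axiom (Imp (And a b) a)"
| Ax5: "cila_axiom (Imp (And a b) b)"
| Ax6: "cila_axiom (Imp a (Or a b))"
| Ax7: "cila_axiom (Imp b (Or a b))"
| Ax8: "cila_axiom (Imp (Imp a c) (Imp (Imp b c) (Imp (Or a b) c)))"
| Ax9: "cila_axiom (Or a (Neg a))"
| Ax10: "cila_axiom (Or a (Imp a b))"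
| bc1: "cila_axiom (Imp (Circ a) (Imp a (Imp (Neg a) b)))"
| ci: "cila_axiom (Imp (Neg (And a (Neg a))) (Circ a))"
| cl: "cila_axiom (Imp (Neg (Circ a)) (And a (Neg a)))"
| cf: "cila_axiom (Imp (Neg (Neg a)) a)"
| ca_or: "cila_axiom (Imp (And (Circ a) (Circ b)) (Circ (Or a b)))"
| ca_and: "cila_axiom (Imp (And (Circ a) (Circ b)) (Circ (And a b)))"
| ca_imp: "cila_axiom (Imp (And (Circ a) (Circ b)) (Circ (Imp a b)))"

inductive cila_derives :: "fm set \<Rightarrow> fm \<Rightarrow> bool" where
  prem: "a \<in> \<Gamma> \<Longrightarrow> cila_derives \<Gamma> a"
| axiom: "cila_axiom a \<Longrightarrow> cila_derives \<Gamma> a"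
| mp: "cila_derives \<Gamma> a \<Longrightarrow> cila_derives \<Gamma> (Imp a b) \<Longrightarrow> cila_derives \<Gamma> b"

datatype tv = F | t | T

definition Dset :: "tv set" where "Dset = {t, T}"

fun mneg :: "tv \<Rightarrow> tv set" where
  "mneg F = {T}" | "mneg t = Dset" | "mneg T = {F}"

fun mcirc :: "tv \<Rightarrow> tv set" where
  "mcirc F = {T}" | "mcirc t = {F}" | "mcirc T = {T}"

definition mor :: "tv \<Rightarrow> tv \<Rightarrow> tv set" where
  "mor x y = (if x = t \<or> y = t then Dset
              else if x = F \<and> y = F then {F} else {T})"

definition mand :: "tv \<Rightarrow> tv \<Rightarrow> tv set" where
  "mand x y = (if x = F \<or> y = F then {F}
               else if x = T \<and> y = T then {T} else Dset)"

definition mimp :: "tv \<Rightarrow> tv \<Rightarrow> tv set" where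
  "mimp x y = (if y = t then Dset
               else if y = T then (if x = t then Dset else {T})
               else (if x = F then {T} else {F}))"

definition valuation :: "(fm \<Rightarrow> tv) \<Rightarrow> bool" where
  "valuation v \<longleftrightarrow>
     (\<forall>a. v (Neg a) \<in> mneg (v a)) \<and>
     (\<forall>a. v (Circ a) \<in> mcirc (v a)) \<and>
     (\<forall>a b. v (And a b) \<in> mand (v a) (v b)) \<and>
     (\<forall>a b. v (Or a b) \<in> mor (v a) (v b)) \<and>
     (\<forall>a b. v (Imp a b) \<in> mimp (v a) (v b))"

definition F_Cila :: "(fm \<Rightarrow> tv) set" where
  "F_Cila = {v. valuation v \<and> (\<forall>a. v a = t \<longrightarrow> v (And a (Neg a)) = T)}"

definition RN_consequence :: "fm set \<Rightarrow> fm \<Rightarrow> bool" where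
  "RN_consequence \<Gamma> \<phi> \<longleftrightarrow>
     (\<forall>v \<in> F_Cila. v ` \<Gamma> \<subseteq> Dset \<longrightarrow> v \<phi> \<in> Dset)"

end

theory Submission
  imports Defs
begin

lemma derives_mono: "cila_derives G a \<Longrightarrow> G \<subseteq> H \<Longrightarrow> cila_derives H a"
  by (induction rule: cila_derives.induct) (auto intro: cila_derives.intros)

lemma derives_finite: "cila_derives G a \<Longrightarrow> \<exists>S. finite S \<and> S \<subseteq> G \<and> cila_derives S a"
proof (induction rule: cila_derives.induct)
  case (prem a \<Gamma>)
  then show ?case by (intro exI[of _ "{a}"]) (auto intro: cila_derives.prem)
next
  case (axiom a \<Gamma>)
  then show ?case by (intro exI[of _ "{}"]) (auto intro: cila_derives.axiom)
next
  case (mp \<Gamma> a b)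
  then obtain S1 S2 where "finite S1" "S1 \<subseteq> \<Gamma>" "cila_derives S1 a"
     "finite S2" "S2 \<subseteq> \<Gamma>" "cila_derives S2 (Imp a b)" by blast
  then show ?case
    by (intro exI[of _ "S1 \<union> S2"]) (auto intro: cila_derives.mp derives_mono)
qed

lemma ax: "cila_axiom a \<Longrightarrow> cila_derives G a" by (rule cila_derives.axiom)

lemma mp2: "cila_derives G (Imp a b) \<Longrightarrow> cila_derives G a \<Longrightarrow> cila_derives G b"
  by (rule cila_derives.mp)

lemma imp_self: "cila_derives G (Imp a a)"
proof -
  have 1: "cila_derives G (Imp (Imp a (Imp (Imp a a) a)) (Imp (Imp a (Imp a a)) (Imp a a)))"
    by (rule ax) (rule Ax2)
  have 2: "cila_derives G (Imp a (Imp (Imp a a) a))" by (rule ax) (rule Ax1)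
  have 3: "cila_derives G (Imp a (Imp a a))" by (rule ax) (rule Ax1)
  show ?thesis by (rule mp2[OF mp2[OF 1 2] 3])
qed

lemma deduction: "cila_derives (insert a G) b \<Longrightarrow> cila_derives G (Imp a b)"
proof (induction "insert a G" b rule: cila_derives.induct)
  case (prem c)
  show ?case
  proof (cases "c = a")
    case True then show ?thesis by (simp add: imp_self)
  next
    case False
    then have "c \<in> G" using prem by auto
    then show ?thesis
      by (rule mp2[OF ax[OF Ax1] cila_derives.prem])
  qed
next
  case (axiom c)
  then show ?case by (rule mp2[OF ax[OF Ax1] ax])
next
  case (mp c d)
  show ?case using mp2[OF mp2[OF ax[OF Ax2] mp.hyps(4)] mp.hyps(2)] .
qed

locale maxset =
  fixes D :: "fm set" and \<phi> :: fm
  assumes nd: "\<not> cila_derives D \<phi>"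
    and mx: "\<And>a. a \<notin> D \<Longrightarrow> cila_derives (insert a D) \<phi>"
begin

lemma closed: "cila_derives D a \<Longrightarrow> a \<in> D"
proof (rule ccontr)
  assume h: "cila_derives D a" "a \<notin> D"
  have "cila_derives D (Imp a \<phi>)" using deduction[OF mx[OF h(2)]] .
  then show False using nd mp2 h(1) by blast
qed

lemma axm: "cila_axiom a \<Longrightarrow> a \<in> D"
  by (rule closed) (rule ax)

lemma mpm: "a \<in> D \<Longrightarrow> Imp a b \<in> D \<Longrightarrow> b \<in> D"
  by (rule closed) (rule mp2[OF cila_derives.prem cila_derives.prem])

lemma phi: "\<phi> \<notin> D" using nd cila_derives.prem by blast

lemma notin: "a \<notin> D \<Longrightarrow> Imp a \<phi> \<in> D"
  using mx deduction closed by blast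

lemma or_D: "Or a b \<in> D \<longleftrightarrow> a \<in> D \<or> b \<in> D"
proof
  assume o: "Or a b \<in> D"
  show "a \<in> D \<or> b \<in> D"
  proof (rule ccontr)
    assume "\<not> (a \<in> D \<or> b \<in> D)"
    then have "Imp a \<phi> \<in> D" "Imp b \<phi> \<in> D" using notin by auto
    then have "\<phi> \<in> D" using o mpm axm[OF Ax8[of a \<phi> b]] by blast
    then show False using phi by simp
  qed
next
  assume "a \<in> D \<or> b \<in> D"
  then show "Or a b \<in> D" using mpm axm[OF Ax6] axm[OF Ax7] by blast
qed

lemma and_D: "And a b \<in> D \<longleftrightarrow> a \<in> D \<and> b \<in> D"
proof
  assume h: "And a b \<in> D"
  show "a \<in> D \<and> b \<in> D"
    using mpm[OF h axm[OF Ax4]] mpm[OF h axm[OF Ax5]] by simp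
next
  assume h: "a \<in> D \<and> b \<in> D"
  show "And a b \<in> D"
    using mpm[OF conjunct2[OF h] mpm[OF conjunct1[OF h] axm[OF Ax3]]] .
qed

lemma imp_D: "Imp a b \<in> D \<longleftrightarrow> a \<notin> D \<or> b \<in> D"
proof
  assume h: "Imp a b \<in> D"
  show "a \<notin> D \<or> b \<in> D" using mpm[OF _ h] by blast
next
  assume h: "a \<notin> D \<or> b \<in> D"
  show "Imp a b \<in> D"
  proof (cases "b \<in> D")
    case True then show ?thesis using mpm[OF True axm[OF Ax1]] by simp
  next
    case False
    have "Or a (Imp a b) \<in> D" by (rule axm) (rule Ax10)
    then show ?thesis using or_D h False by blast
  qed
qed

lemma neg_ex: "a \<in> D \<or> Neg a \<in> D"
  using axm[OF Ax9[of a]] or_D by blast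

lemma nn: "Neg (Neg a) \<in> D \<Longrightarrow> a \<in> D"
  using mpm axm[OF cf] by blast

lemma bc: "Circ a \<in> D \<Longrightarrow> a \<in> D \<Longrightarrow> Neg a \<in> D \<Longrightarrow> False"
proof -
  assume h: "Circ a \<in> D" "a \<in> D" "Neg a \<in> D"
  have "\<phi> \<in> D" using mpm[OF h(3) mpm[OF h(2) mpm[OF h(1) axm[OF bc1[of a \<phi>]]]]] .
  then show False using phi by simp
qed

lemma ci_D: "Neg (And a (Neg a)) \<in> D \<Longrightarrow> Circ a \<in> D"
  using mpm axm[OF ci] by blast

lemma cl_D: "Neg (Circ a) \<in> D \<Longrightarrow> a \<in> D \<and> Neg a \<in> D"
proof -
  assume h: "Neg (Circ a) \<in> D"
  have "And a (Neg a) \<in> D" using mpm[OF h axm[OF cl]] .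
  then show ?thesis using and_D by simp
qed

lemma circ_of: "\<not> (a \<in> D \<and> Neg a \<in> D) \<Longrightarrow> Circ a \<in> D"
proof -
  assume h: "\<not> (a \<in> D \<and> Neg a \<in> D)"
  then have "And a (Neg a) \<notin> D" using and_D by simp
  then have "Neg (And a (Neg a)) \<in> D" using neg_ex by blast
  then show ?thesis by (rule ci_D)
qed

lemma ca: "Circ a \<in> D \<Longrightarrow> Circ b \<in> D \<Longrightarrow>
   Circ (Or a b) \<in> D \<and> Circ (And a b) \<in> D \<and> Circ (Imp a b) \<in> D"
proof -
  assume "Circ a \<in> D" "Circ b \<in> D"
  then have h: "And (Circ a) (Circ b) \<in> D" using and_D by simp
  show ?thesis using mpm[OF h axm[OF ca_or]] mpm[OF h axm[OF ca_and]] mpm[OF h axm[OF ca_imp]] by simp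
qed

definition v :: "fm \<Rightarrow> tv" where
  "v a = (if a \<in> D then (if Neg a \<in> D then t else T) else F)"

lemma v_circ: "v a \<noteq> t \<Longrightarrow> Circ a \<in> D"
  by (rule circ_of) (auto simp: v_def split: if_splits)

lemma vT: "c \<in> D \<Longrightarrow> Circ c \<in> D \<Longrightarrow> v c = T"
  using bc by (auto simp: v_def)

lemma vF: "c \<notin> D \<Longrightarrow> v c = F"
  by (auto simp: v_def)

lemma vD: "c \<in> D \<Longrightarrow> v c \<in> Dset"
  by (auto simp: v_def Dset_def)

lemma v_neg: "v (Neg a) \<in> mneg (v a)"
proof (cases "a \<in> D")
  case False
  then have "Neg a \<in> D" "Neg (Neg a) \<notin> D" using neg_ex nn by blast+
  then show ?thesis using False by (simp add: v_def)
next
  case True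
  then show ?thesis by (simp add: v_def Dset_def)
qed

lemma v_circ2: "v (Circ a) \<in> mcirc (v a)"
proof (cases "v a = t")
  case True
  then have h: "a \<in> D" "Neg a \<in> D" by (auto simp: v_def split: if_splits)
  then have "Circ a \<notin> D" using bc by blast
  then show ?thesis using True by (simp add: v_def)
next
  case False
  then have c: "Circ a \<in> D" by (rule v_circ)
  then have "Neg (Circ a) \<notin> D" using cl_D bc by blast
  then have "v (Circ a) = T" using c by (simp add: v_def)
  then show ?thesis using False by (cases "v a") auto
qed

lemma v_rest: "v a = t \<Longrightarrow> v (And a (Neg a)) = T"
proof -
  assume "v a = t"
  then have h: "a \<in> D" "Neg a \<in> D" by (auto simp: v_def split: if_splits)
  then have "And a (Neg a) \<in> D" using and_D by blast
  moreover have "Neg (And a (Neg a)) \<notin> D" using ci_D bc h by blast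
  ultimately show ?thesis by (simp add: v_def)
qed

lemma v_and: "v (And a b) \<in> mand (v a) (v b)"
proof (cases "a \<in> D \<and> b \<in> D")
  case False
  then have "And a b \<notin> D" using and_D by blast
  moreover have "v a = F \<or> v b = F" using False by (auto simp: v_def)
  ultimately show ?thesis by (simp add: mand_def vF)
next
  case True
  then have abD: "And a b \<in> D" using and_D by blast
  have nF: "v a \<noteq> F" "v b \<noteq> F" using True by (auto simp: v_def)
  show ?thesis
  proof (cases "v a = T \<and> v b = T")
    case tt: True
    then have "Circ a \<in> D" "Circ b \<in> D" using v_circ by auto
    then have "Circ (And a b) \<in> D" using ca by blast
    then have "v (And a b) = T" using abD vT by blast
    then show ?thesis using tt by (simp add: mand_def)
  next
    case f: False
    have "v (And a b) \<in> Dset" using abD vD by blast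
    then show ?thesis using f nF by (auto simp: mand_def)
  qed
qed

lemma v_or: "v (Or a b) \<in> mor (v a) (v b)"
proof (cases "v a = t \<or> v b = t")
  case True
  then have "a \<in> D \<or> b \<in> D" by (auto simp: v_def split: if_splits)
  then have "Or a b \<in> D" using or_D by blast
  then have "v (Or a b) \<in> Dset" using vD by blast
  then show ?thesis using True by (simp add: mor_def)
next
  case False
  then have "Circ a \<in> D" "Circ b \<in> D" using v_circ by auto
  then have c: "Circ (Or a b) \<in> D" using ca by blast
  show ?thesis
  proof (cases "a \<in> D \<or> b \<in> D")
    case f2: False
    then have "Or a b \<notin> D" using or_D by blast
    moreover have "v a = F" "v b = F" using f2 by (auto simp: v_def)
    ultimately show ?thesis by (simp add: mor_def vF)
  next
    case True
    then have "Or a b \<in> D" using or_D by blast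
    then have "v (Or a b) = T" using c vT by blast
    moreover have "\<not> (v a = F \<and> v b = F)" using True by (auto simp: v_def)
    ultimately show ?thesis using False by (simp add: mor_def)
  qed
qed

lemma v_imp: "v (Imp a b) \<in> mimp (v a) (v b)"
proof (cases "v b = t \<or> (v b = T \<and> v a = t)")
  case True
  then have "b \<in> D" by (auto simp: v_def split: if_splits)
  then have "Imp a b \<in> D" using imp_D by blast
  then have "v (Imp a b) \<in> Dset" using vD by blast
  then show ?thesis using True by (auto simp: mimp_def)
next
  case False
  show ?thesis
  proof (cases "v b = T \<or> v a = F")
    case True
    then have "Circ a \<in> D" "Circ b \<in> D" using v_circ False by auto
    then have c: "Circ (Imp a b) \<in> D" using ca by blast
    have "b \<in> D \<or> a \<notin> D" using True by (auto simp: v_def split: if_splits)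
    then have "Imp a b \<in> D" using imp_D by blast
    then have "v (Imp a b) = T" using c vT by blast
    then show ?thesis using False True by (cases "v a"; cases "v b"; simp add: mimp_def)
  next
    case f2: False
    then have "v b = F" using False by (cases "v b") auto
    then have "b \<notin> D" by (auto simp: v_def split: if_splits)
    moreover have "a \<in> D" using f2 by (auto simp: v_def split: if_splits)
    ultimately have "Imp a b \<notin> D" using imp_D by blast
    then have "v (Imp a b) = F" by (rule vF)
    then show ?thesis using False f2 by (cases "v a"; cases "v b"; simp add: mimp_def)
  qed
qed

lemma valuation_v: "v \<in> F_Cila"
  unfolding F_Cila_def valuation_def
  using v_neg v_circ2 v_rest v_and v_or v_imp by blast

end

lemma lindenbaum:
  assumes "\<not> cila_derives G \<phi>"
  shows "\<exists>D. G \<subseteq> D \<and> maxset D \<phi>"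
proof -
  let ?A = "{D. G \<subseteq> D \<and> \<not> cila_derives D \<phi>}"
  have "\<exists>M\<in>?A. \<forall>X\<in>?A. M \<subseteq> X \<longrightarrow> X = M"
  proof (rule subset_Zorn_nonempty)
    show "?A \<noteq> {}" using assms by blast
  next
    fix C assume ne: "C \<noteq> {}" and ch: "subset.chain ?A C"
    have sub: "C \<subseteq> ?A" using ch by (simp add: subset_chain_def)
    show "\<Union>C \<in> ?A"
    proof (intro CollectI conjI)
      show "G \<subseteq> \<Union>C" using ne sub by blast
      show "\<not> cila_derives (\<Union>C) \<phi>"
      proof
        assume "cila_derives (\<Union>C) \<phi>"
        then obtain S where S: "finite S" "S \<subseteq> \<Union>C" "cila_derives S \<phi>"
          using derives_finite by blast
        then obtain B where "B \<in> C" "S \<subseteq> B"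
          using finite_subset_Union_chain[OF S(1) S(2) ne ch] by blast
        then show False using S(3) sub derives_mono by blast
      qed
    qed
  qed
  then obtain M where M: "M \<in> ?A" and mm: "\<forall>X\<in>?A. M \<subseteq> X \<longrightarrow> X = M" by blast
  have "maxset M \<phi>"
  proof
    show "\<not> cila_derives M \<phi>" using M by blast
    fix a assume "a \<notin> M"
    show "cila_derives (insert a M) \<phi>"
    proof (rule ccontr)
      assume "\<not> cila_derives (insert a M) \<phi>"
      then have "insert a M \<in> ?A" using M by blast
      then have "insert a M = M" using mm by blast
      then show False using \<open>a \<notin> M\<close> by blast
    qed
  qed
  then show ?thesis using M by blast
qed

theorem mainTheorem7:
  fixes \<Gamma> :: "fm set" and \<phi> :: fm
  assumes "RN_consequence \<Gamma> \<phi>"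
  shows "cila_derives \<Gamma> \<phi>"
proof (rule ccontr)
  assume "\<not> cila_derives \<Gamma> \<phi>"
  then obtain D where D: "\<Gamma> \<subseteq> D" "maxset D \<phi>" using lindenbaum by blast
  interpret maxset D \<phi> by (rule D(2))
  have "v ` \<Gamma> \<subseteq> Dset" using D(1) vD by blast
  then have "v \<phi> \<in> Dset" using assms valuation_v unfolding RN_consequence_def by blast
  then show False using phi vF by (simp add: Dset_def)
qed

end
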